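(* Let $D\mathcal{M}$ be a $\bar{\ell c}$DCB$_1$ system. Then for every $\theta\in C([-\tau,0];\mathbb{R}^n_{>0})$, the stoichiometric compatibility class $\mathcal P_\theta$ of $D\mathcal{M}$ contains exactly one positive equilibrium of $D\mathcal{M}$.
   Context: For $x,y\in\mathbb{R}^n$ with $x\ge 0$, write $x^{y}=\prod_{j=1}^n x_j^{y_j}$. A delayed mass-action system on species $X_1,\dots,X_n$ consists of reactions $R_i: y_{\cdot i}\to y'_{\cdot i}$, $i=1,\dots,r$, with complexes $y_{\cdot i},y'_{\cdot i}\in\mathbb{R}^n_{\ge0}$, rate constants $\kappa_i>0$ and delays $\tau_i\ge0$; with $\tau\ge\max_i\tau_i$, its dynamics is the delay differential equation $\dot x(t)=\sum_{i=1}^r\kappa_i\big[x(t-\tau_i)^{y_{\cdot i}}y'_{\cdot i}-x(t)^{y_{\cdot i}}y_{\cdot i}\big]$, $t\ge 0$, with initial function $\theta\in C([-\tau,0];\mathbb{R}^n_{\ge0})$. Its stoichiometric subspace is $\mathscr S=\mathrm{span}\{y'_{\cdot i}-y_{\cdot i}\}$. A positive equilibrium is $x^*\in\mathbb{R}^n_{>0}$ with $\sum_i\kappa_i (x^* )^{y_{\cdot i}}(y'_{\cdot i}-y_{\cdot i})=0$ (viewed as a constant function). The stoichiometric compatibility class containing $\theta$ is $\mathcal P_\theta=\{\psi\in C([-\tau,0];\mathbb{R}^n_{\ge0}): c_a(\psi)=c_a(\theta)\ \forall a\in\mathscr S^\perp\}$, where $c_a(\psi)=a^\top\big[\psi(0)+\sum_{i=1}^r\big(\kappa_i\int_{-\tau_i}^0\psi(s)^{y_{\cdot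 i}}ds\big)y_{\cdot i}\big]$. A vector $\bar x\in\mathbb{R}^n_{>0}$ is a complex balanced equilibrium if for every complex $\eta$ of the network $\sum_{i: y_{\cdot i}=\eta}\kappa_i\bar x^{y_{\cdot i}}=\sum_{i: y'_{\cdot i}=\eta}\kappa_i\bar x^{y_{\cdot i}}$; a complex balanced system is a mass-action system admitting a positive complex balanced equilibrium. A delayed mass-action system $D\mathcal{M}$ with reactions $y_{\cdot i}\to y_{\cdot i}+v_{\cdot i}$, rate constants $\kappa_i$, delays $\tau_i$ ($i=1,\dots,r$) is a $\bar{\ell c}$DCB$_1$ system if there is a complex balanced mass-action system $\tilde{\mathcal{M}}$ on the same species with exactly $r$ reactions $y_{\cdot i}\to y_{\cdot i}+\tilde v_{\cdot i}$ (same reactant complexes) and rate constants $\tilde\kappa_i>0$, such that for each $i$, $v_{\cdot i}=b_i\tilde v_{\cdot i}$ with $b_i=\tilde\kappa_i/\kappa_i\le 1$. *)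

theory Defs
  imports "HOL-Analysis.Analysis"
begin

text \<open>Species are indexed by a finite type 'n (so states live in real^'n),
reactions by a finite type 'r.  A reaction i has reactant complex y i and
reaction vector v i, i.e. product complex y i + v i.\<close>

definition nonneg_vec :: "real^'n \<Rightarrow> bool" where
  "nonneg_vec x \<longleftrightarrow> (\<forall>j. 0 \<le> x $ j)"

definition pos_vec :: "real^'n \<Rightarrow> bool" where
  "pos_vec x \<longleftrightarrow> (\<forall>j. 0 < x $ j)"

text \<open>Monomial x^y = prod_j x_j^(y_j), with the convention 0^0 = 1.\<close>
definition mpow :: "real^'n::finite \<Rightarrow> real^'n \<Rightarrow> real" where
  "mpow x y = (\<Prod>j\<in>UNIV. (if y $ j = 0 then 1 else (x $ j) powr (y $ j)))"

definition delayed_mas ::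
  "('r::finite \<Rightarrow> real) \<Rightarrow> ('r \<Rightarrow> real) \<Rightarrow> ('r \<Rightarrow> real^'n::finite) \<Rightarrow> ('r \<Rightarrow> real^'n) \<Rightarrow> bool" where
  "delayed_mas \<kappa> \<tau>d y v \<longleftrightarrow>
     (\<forall>i. 0 < \<kappa> i \<and> 0 \<le> \<tau>d i \<and> nonneg_vec (y i) \<and> nonneg_vec (y i + v i))"

definition stoich_subspace :: "('r::finite \<Rightarrow> real^'n::finite) \<Rightarrow> (real^'n) set" where
  "stoich_subspace v = span (range v)"

definition c_fun ::
  "('r::finite \<Rightarrow> real) \<Rightarrow> ('r \<Rightarrow> real) \<Rightarrow> ('r \<Rightarrow> real^'n::finite) \<Rightarrow> real^'n
     \<Rightarrow> (real \<Rightarrow> real^'n) \<Rightarrow> real" where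
  "c_fun \<kappa> \<tau>d y a \<psi> =
     a \<bullet> (\<psi> 0 + (\<Sum>i\<in>UNIV. (\<kappa> i * integral {- \<tau>d i..0} (\<lambda>s. mpow (\<psi> s) (y i))) *\<^sub>R y i))"

definition compat_class ::
  "('r::finite \<Rightarrow> real) \<Rightarrow> ('r \<Rightarrow> real) \<Rightarrow> ('r \<Rightarrow> real^'n::finite) \<Rightarrow> ('r \<Rightarrow> real^'n)
     \<Rightarrow> real \<Rightarrow> (real \<Rightarrow> real^'n) \<Rightarrow> (real \<Rightarrow> real^'n) set" where
  "compat_class \<kappa> \<tau>d y v \<tau> \<theta> =
     {\<psi>. continuous_on {-\<tau>..0} \<psi> \<and> (\<forall>s\<in>{-\<tau>..0}. nonneg_vec (\<psi> s)) \<and>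
          (\<forall>a. (\<forall>w\<in>stoich_subspace v. a \<bullet> w = 0) \<longrightarrow>
               c_fun \<kappa> \<tau>d y a \<psi> = c_fun \<kappa> \<tau>d y a \<theta>)}"

definition pos_equilibrium ::
  "('r::finite \<Rightarrow> real) \<Rightarrow> ('r \<Rightarrow> real^'n::finite) \<Rightarrow> ('r \<Rightarrow> real^'n) \<Rightarrow> real^'n \<Rightarrow> bool" where
  "pos_equilibrium \<kappa> y v x \<longleftrightarrow>
     pos_vec x \<and> (\<Sum>i\<in>UNIV. (\<kappa> i * mpow x (y i)) *\<^sub>R v i) = 0"

definition complex_balanced_eq ::
  "('r::finite \<Rightarrow> real) \<Rightarrow> ('r \<Rightarrow> real^'n::finite) \<Rightarrow> ('r \<Rightarrow> real^'n) \<Rightarrow> real^'n \<Rightarrow> bool" where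
  "complex_balanced_eq \<kappa> y y' xb \<longleftrightarrow>
     pos_vec xb \<and>
     (\<forall>\<eta>\<in>range y \<union> range y'.
        (\<Sum>i\<in>{i. y i = \<eta>}. \<kappa> i * mpow xb (y i)) = (\<Sum>i\<in>{i. y' i = \<eta>}. \<kappa> i * mpow xb (y i)))"

definition complex_balanced_system ::
  "('r::finite \<Rightarrow> real) \<Rightarrow> ('r \<Rightarrow> real^'n::finite) \<Rightarrow> ('r \<Rightarrow> real^'n) \<Rightarrow> bool" where
  "complex_balanced_system \<kappa> y y' \<longleftrightarrow>
     (\<forall>i. 0 < \<kappa> i \<and> nonneg_vec (y i) \<and> nonneg_vec (y' i)) \<and> (\<exists>xb. complex_balanced_eq \<kappa> y y' xb)"

definition lcDCB1 ::
  "('r::finite \<Rightarrow> real) \<Rightarrow> ('r \<Rightarrow> real) \<Rightarrow> ('r \<Rightarrow> real^'n::finite) \<Rightarrow> ('r \<Rightarrow> real^'n) \<Rightarrow> bool" where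
  "lcDCB1 \<kappa> \<tau>d y v \<longleftrightarrow> delayed_mas \<kappa> \<tau>d y v \<and>
     (\<exists>vt \<kappa>t. complex_balanced_system \<kappa>t y (\<lambda>i. y i + vt i) \<and>
        (\<forall>i. v i = (\<kappa>t i / \<kappa> i) *\<^sub>R vt i \<and> \<kappa>t i / \<kappa> i \<le> 1))"

end

theory Submission
  imports Defs
begin


definition Lv :: "real^'n::finite \<Rightarrow> real^'n" where
  "Lv x = (\<chi> j. ln (x $ j))"

lemma mpow_exp:
  assumes "pos_vec x"
  shows "mpow x y = exp (y \<bullet> Lv x)"
proof -
  have "mpow x y = (\<Prod>j\<in>UNIV. exp (y $ j * ln (x $ j)))"
    unfolding mpow_def
  proof (rule prod.cong[OF refl])
    fix j have "x $ j > 0" using assms unfolding pos_vec_def by auto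
    then show "(if y $ j = 0 then 1 else x $ j powr y $ j) = exp (y $ j * ln (x $ j))"
      by (auto simp: powr_def)
  qed
  also have "\<dots> = exp (\<Sum>j\<in>UNIV. y $ j * ln (x $ j))" by (simp add: exp_sum)
  also have "\<dots> = exp (y \<bullet> Lv x)" by (simp add: inner_vec_def Lv_def)
  finally show ?thesis .
qed

lemma mpow_nonneg: "0 \<le> mpow x y"
  unfolding mpow_def by (rule prod_nonneg) auto

lemma CB_sum:
  fixes F :: "real^'n::finite \<Rightarrow> 'a::real_vector" and y y' :: "'r::finite \<Rightarrow> real^'n"
  assumes "complex_balanced_eq k y y' xb"
  shows "(\<Sum>i\<in>UNIV. (k i * mpow xb (y i)) *\<^sub>R F (y' i)) = (\<Sum>i\<in>UNIV. (k i * mpow xb (y i)) *\<^sub>R F (y i))"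
proof -
  define C where "C = range y \<union> range y'"
  define c where "c i = k i * mpow xb (y i)" for i
  have fC: "finite C" unfolding C_def by auto
  have "(\<Sum>i\<in>UNIV. c i *\<^sub>R F (y' i)) = (\<Sum>\<eta>\<in>C. \<Sum>i\<in>{i\<in>UNIV. y' i = \<eta>}. c i *\<^sub>R F (y' i))"
    by (rule sum.group[symmetric]) (auto simp: C_def fC)
  also have "\<dots> = (\<Sum>\<eta>\<in>C. (\<Sum>i\<in>{i. y' i = \<eta>}. c i) *\<^sub>R F \<eta>)"
    by (rule sum.cong) (auto simp: scaleR_sum_left)
  also have "\<dots> = (\<Sum>\<eta>\<in>C. (\<Sum>i\<in>{i. y i = \<eta>}. c i) *\<^sub>R F \<eta>)"
    using assms unfolding complex_balanced_eq_def C_def c_def by (intro sum.cong) auto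
  also have "\<dots> = (\<Sum>\<eta>\<in>C. \<Sum>i\<in>{i\<in>UNIV. y i = \<eta>}. c i *\<^sub>R F (y i))"
    by (rule sum.cong) (auto simp: scaleR_sum_left)
  also have "\<dots> = (\<Sum>i\<in>UNIV. c i *\<^sub>R F (y i))"
    by (rule sum.group) (auto simp: C_def fC)
  finally show ?thesis unfolding c_def .
qed

lemma exp_strict: fixes t :: real assumes "t \<noteq> 0" shows "1 + t < exp t"
proof (cases "1 + t/2 \<ge> 0")
  case True
  have "exp t = exp (t/2)^2" by (simp add: power2_eq_square exp_add[symmetric])
  moreover have "(1 + t/2)^2 \<le> exp (t/2)^2"
    using True exp_ge_add_one_self[of "t/2"] by (intro power_mono) auto
  moreover have "0 < t*t" using assms by (auto simp: zero_less_mult_iff linorder_neq_iff)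
  then have "1 + t < (1+t/2)^2" by (simp add: power2_eq_square field_simps)
  ultimately show ?thesis by linarith
next
  case False
  then show ?thesis using exp_gt_zero[of t] by linarith
qed

lemma coercive1:
  fixes a p :: real assumes "0 < a" "0 < p"
  shows "\<exists>B. \<forall>s. a * exp s - p * s \<le> K \<longrightarrow> \<bar>s\<bar> \<le> B"
proof -
  define B where "B = max (\<bar>K\<bar>/p) (max 1 (4*(\<bar>K\<bar>+p)/a))"
  have "\<bar>s\<bar> \<le> B" if h: "a * exp s - p * s \<le> K" for s
  proof (cases "s < 0")
    case True
    have "0 < a * exp s" using \<open>0<a\<close> by simp
    then have "- p * s \<le> K" using h by linarith
    then have "p * \<bar>s\<bar> \<le> \<bar>K\<bar>" using True by auto
    then have "\<bar>s\<bar> \<le> \<bar>K\<bar>/p" using assms by (simp add: field_simps)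
    then show ?thesis unfolding B_def by linarith
  next
    case False
    show ?thesis
    proof (rule ccontr)
      assume "\<not> \<bar>s\<bar> \<le> B"
      then have s1: "s > 1" and s2: "s > 4*(\<bar>K\<bar>+p)/a" using False unfolding B_def by auto
      have e: "exp s = exp (s/2)^2" by (simp add: power2_eq_square exp_add[symmetric])
      have "(1 + s/2)^2 \<le> exp (s/2)^2"
        using s1 exp_ge_add_one_self[of "s/2"] by (intro power_mono) auto
      then have "s^2/4 \<le> exp s" using e s1 by (simp add: power2_eq_square field_simps)
      then have "a * (s^2/4) \<le> a * exp s" using assms by (intro mult_left_mono) auto
      then have "a * (s^2/4) - p * s \<le> K" using h by linarith
      then have "a * s * s \<le> 4 * (K + p * s)" by (simp add: power2_eq_square field_simps)
      moreover have "4*(\<bar>K\<bar>+p) < a * s" using s2 assms by (simp add: field_simps)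
      then have "4 * (\<bar>K\<bar> + p) * s < a * s * s" using s1 by (intro mult_strict_right_mono) auto
      moreover have "\<bar>K\<bar> * 1 \<le> \<bar>K\<bar> * s" using s1 by (intro mult_left_mono) auto
      then have "4 * (K + p * s) \<le> 4 * (\<bar>K\<bar> + p) * s" using abs_ge_self[of K] by (simp add: algebra_simps)
      ultimately show False by linarith
    qed
  qed
  then show ?thesis by blast
qed

lemma lower1:
  fixes r q :: real assumes "0 \<le> r" "0 \<le> q" "r = 0 \<longrightarrow> q = 0"
  shows "\<exists>D. \<forall>s. D \<le> r * exp s - q * s"
proof (cases "r = 0")
  case True then show ?thesis using assms by auto
next
  case False
  then have r: "r > 0" using assms by auto
  show ?thesis
  proof (cases "q = 0")
    case True then show ?thesis using r by (intro exI[of _ 0]) auto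
  next
    case False
    then have q: "q > 0" using assms by auto
    obtain B where B: "\<forall>s. r * exp s - q * s \<le> 0 \<longrightarrow> \<bar>s\<bar> \<le> B" using coercive1[OF r q] by blast
    show ?thesis
    proof (intro exI[of _ "- q * max B 0"] allI)
      fix s
      show "- q * max B 0 \<le> r * exp s - q * s"
      proof (cases "r * exp s - q * s \<le> 0")
        case True then have "\<bar>s\<bar> \<le> max B 0" using B by auto
        then have "s \<le> max B 0" by linarith
        then have "q * s \<le> q * max B 0" using q by (intro mult_left_mono) auto
        moreover have "0 < r * exp s" using r by simp
        ultimately show ?thesis by linarith
      next
        case False
        moreover have "0 \<le> q * max B 0" using q by simp
        ultimately show ?thesis by linarith
      qed
    qed
  qed
qed



definition Wsp :: "('r::finite \<Rightarrow> real^'n::finite) \<Rightarrow> (real^'n) set" where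
  "Wsp v = {\<mu>. \<forall>w\<in>stoich_subspace v. \<mu> \<bullet> w = 0}"

lemma Wsp_diff: "a \<in> Wsp v \<Longrightarrow> b \<in> Wsp v \<Longrightarrow> a - b \<in> Wsp v"
  by (auto simp: Wsp_def inner_diff_left)

lemma Wsp_lin: "a \<in> Wsp v \<Longrightarrow> b \<in> Wsp v \<Longrightarrow> a + t *\<^sub>R b \<in> Wsp v"
  by (auto simp: Wsp_def inner_add_left)

lemma Wsp_closed: "closed (Wsp v)"
proof -
  have "Wsp v = (\<Inter>w\<in>stoich_subspace v. {\<mu>. w \<bullet> \<mu> = 0})"
    by (auto simp: Wsp_def inner_commute)
  then show ?thesis by (auto intro!: closed_INT closed_hyperplane)
qed

lemma ln_mono_prod: fixes u w :: real assumes "0 < u" "0 < w"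
  shows "0 \<le> (ln u - ln w) * (u - w)" and "(ln u - ln w) * (u - w) = 0 \<Longrightarrow> u = w"
proof -
  have c: "u < w \<or> u = w \<or> w < u" by auto
  show "0 \<le> (ln u - ln w) * (u - w)"
    using c assms by (auto simp: mult_nonpos_nonpos mult_nonneg_nonneg)
  show "(ln u - ln w) * (u - w) = 0 \<Longrightarrow> u = w"
    using c assms by auto
qed

lemma exp_mono_prod: fixes A B :: real shows "0 \<le> (exp A - exp B) * (A - B)"
  by (cases "A \<le> B") (auto intro: mult_nonpos_nonpos mult_nonneg_nonneg)

locale dcb =
  fixes \<kappa> \<tau>d \<kappa>t :: "'r::finite \<Rightarrow> real" and y v vt :: "'r \<Rightarrow> real^'n::finite" and xb :: "real^'n"
  assumes dm: "delayed_mas \<kappa> \<tau>d y v"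
    and cbs: "complex_balanced_system \<kappa>t y (\<lambda>i. y i + vt i)"
    and cbe: "complex_balanced_eq \<kappa>t y (\<lambda>i. y i + vt i) xb"
    and hv: "\<forall>i. v i = (\<kappa>t i / \<kappa> i) *\<^sub>R vt i"

context dcb
begin

lemma kpos: "0 < \<kappa> i" using dm by (auto simp: delayed_mas_def)
lemma ktpos: "0 < \<kappa>t i" using cbs by (auto simp: complex_balanced_system_def)
lemma tdnn: "0 \<le> \<tau>d i" using dm by (auto simp: delayed_mas_def)
lemma xbpos: "pos_vec xb" using cbe by (auto simp: complex_balanced_eq_def)

lemma K_form:
  assumes "pos_vec x"
  shows "(\<Sum>i\<in>UNIV. (\<kappa> i * mpow x (y i)) *\<^sub>R v i)
     = (\<Sum>i\<in>UNIV. (\<kappa>t i * mpow xb (y i) * exp (y i \<bullet> (Lv x - Lv xb))) *\<^sub>R vt i)"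
proof (rule sum.cong[OF refl])
  fix i
  have "mpow x (y i) = mpow xb (y i) * exp (y i \<bullet> (Lv x - Lv xb))"
    using mpow_exp[OF assms] mpow_exp[OF xbpos]
    by (simp add: inner_diff_right exp_diff)
  then show "(\<kappa> i * mpow x (y i)) *\<^sub>R v i = (\<kappa>t i * mpow xb (y i) * exp (y i \<bullet> (Lv x - Lv xb))) *\<^sub>R vt i"
    using hv kpos[of i] by (simp add: field_simps)
qed

lemma orth_iff: "(\<forall>i. vt i \<bullet> \<mu> = 0) \<longleftrightarrow> \<mu> \<in> Wsp v"
proof
  assume h: "\<forall>i. vt i \<bullet> \<mu> = 0"
  show "\<mu> \<in> Wsp v" unfolding Wsp_def stoich_subspace_def
  proof (intro CollectI ballI)
    fix w assume "w \<in> span (range v)"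
    then have "orthogonal \<mu> w"
      by (rule orthogonal_to_span) (use h hv in \<open>auto simp: orthogonal_def inner_commute\<close>)
    then show "\<mu> \<bullet> w = 0" by (simp add: orthogonal_def)
  qed
next
  assume h: "\<mu> \<in> Wsp v"
  show "\<forall>i. vt i \<bullet> \<mu> = 0"
  proof
    fix i
    have "v i \<in> stoich_subspace v" by (simp add: stoich_subspace_def span_base)
    then have "\<mu> \<bullet> v i = 0" using h by (auto simp: Wsp_def)
    then have "(\<kappa>t i / \<kappa> i) * (vt i \<bullet> \<mu>) = 0" using hv by (simp add: inner_commute)
    then show "vt i \<bullet> \<mu> = 0" using kpos[of i] ktpos[of i] by simp
  qed
qed

lemma eq_iff:
  assumes "pos_vec x"
  shows "pos_equilibrium \<kappa> y v x \<longleftrightarrow> Lv x - Lv xb \<in> Wsp v"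
proof -
  define \<mu> where "\<mu> = Lv x - Lv xb"
  define c where "c i = \<kappa>t i * mpow xb (y i)" for i
  have K: "(\<Sum>i\<in>UNIV. (\<kappa> i * mpow x (y i)) *\<^sub>R v i) = (\<Sum>i\<in>UNIV. (c i * exp (y i \<bullet> \<mu>)) *\<^sub>R vt i)"
    using K_form[OF assms] by (simp add: c_def \<mu>_def)
  have cpos: "0 < c i" for i using ktpos[of i] mpow_exp[OF xbpos] by (simp add: c_def)
  have "(\<Sum>i\<in>UNIV. (c i * exp (y i \<bullet> \<mu>)) *\<^sub>R vt i) = 0 \<longleftrightarrow> (\<forall>i. vt i \<bullet> \<mu> = 0)"
  proof
    assume h: "\<forall>i. vt i \<bullet> \<mu> = 0"
    have "(\<Sum>i\<in>UNIV. (c i * exp (y i \<bullet> \<mu>)) *\<^sub>R vt i)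
        = (\<Sum>i\<in>UNIV. c i *\<^sub>R (exp ((y i + vt i) \<bullet> \<mu>) *\<^sub>R (y i + vt i)))
          - (\<Sum>i\<in>UNIV. c i *\<^sub>R (exp (y i \<bullet> \<mu>) *\<^sub>R y i))"
      unfolding sum_subtractf[symmetric]
    proof (rule sum.cong[OF refl])
      fix i
      have "(y i + vt i) \<bullet> \<mu> = y i \<bullet> \<mu>" using h by (simp add: inner_add_left)
      then show "(c i * exp (y i \<bullet> \<mu>)) *\<^sub>R vt i = c i *\<^sub>R (exp ((y i + vt i) \<bullet> \<mu>) *\<^sub>R (y i + vt i)) - c i *\<^sub>R (exp (y i \<bullet> \<mu>) *\<^sub>R y i)"
        by (simp add: scaleR_add_right)
    qed
    also have "\<dots> = 0"
      using CB_sum[OF cbe, of "\<lambda>\<eta>. exp (\<eta> \<bullet> \<mu>) *\<^sub>R \<eta>"] by (simp add: c_def)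
    finally show "(\<Sum>i\<in>UNIV. (c i * exp (y i \<bullet> \<mu>)) *\<^sub>R vt i) = 0" .
  next
    assume h: "(\<Sum>i\<in>UNIV. (c i * exp (y i \<bullet> \<mu>)) *\<^sub>R vt i) = 0"
    define a where "a i = y i \<bullet> \<mu>" for i
    define d where "d i = vt i \<bullet> \<mu>" for i
    have s1: "(\<Sum>i\<in>UNIV. c i * exp (a i) * d i) = 0"
    proof -
      have "\<mu> \<bullet> (\<Sum>i\<in>UNIV. (c i * exp (y i \<bullet> \<mu>)) *\<^sub>R vt i) = 0" using h by simp
      then show ?thesis by (simp add: inner_sum_right a_def d_def inner_commute)
    qed
    have s2: "(\<Sum>i\<in>UNIV. c i * exp (a i + d i)) = (\<Sum>i\<in>UNIV. c i * exp (a i))"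
      using CB_sum[OF cbe, of "\<lambda>\<eta>. exp (\<eta> \<bullet> \<mu>)"] by (simp add: c_def a_def d_def inner_add_left)
    have s3: "(\<Sum>i\<in>UNIV. c i * exp (a i) * (exp (d i) - 1 - d i)) = 0"
    proof -
      have "(\<Sum>i\<in>UNIV. c i * exp (a i) * (exp (d i) - 1 - d i))
          = (\<Sum>i\<in>UNIV. c i * exp (a i + d i)) - (\<Sum>i\<in>UNIV. c i * exp (a i)) - (\<Sum>i\<in>UNIV. c i * exp (a i) * d i)"
        unfolding sum_subtractf[symmetric] by (rule sum.cong[OF refl]) (simp add: exp_add algebra_simps)
      then show ?thesis using s1 s2 by simp
    qed
    have nn: "\<forall>i\<in>UNIV. 0 \<le> c i * exp (a i) * (exp (d i) - 1 - d i)"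
    proof
      fix i
      have "0 \<le> exp (d i) - 1 - d i" using exp_ge_add_one_self[of "d i"] by linarith
      moreover have "0 \<le> c i * exp (a i)" using cpos[of i] by simp
      ultimately show "0 \<le> c i * exp (a i) * (exp (d i) - 1 - d i)" by simp
    qed
    have z: "c i * exp (a i) * (exp (d i) - 1 - d i) = 0" for i
      using sum_nonneg_eq_0_iff[of UNIV "\<lambda>i. c i * exp (a i) * (exp (d i) - 1 - d i)"] nn s3 by auto
    have "exp (d i) = 1 + d i" for i
    proof -
      have "c i * exp (a i) \<noteq> 0" using cpos[of i] by simp
      then have "exp (d i) - 1 - d i = 0" using z[of i] by simp
      then show ?thesis by simp
    qed
    then show "\<forall>i. vt i \<bullet> \<mu> = 0" using exp_strict unfolding d_def by (metis less_irrefl)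
  qed
  then show ?thesis unfolding pos_equilibrium_def using K assms orth_iff \<mu>_def by simp
qed

end


context dcb
begin

definition G :: "real^'n \<Rightarrow> real^'n" where
  "G x = x + (\<Sum>i\<in>UNIV. (\<kappa> i * (\<tau>d i * mpow x (y i))) *\<^sub>R y i)"

lemma cfun_const: "c_fun \<kappa> \<tau>d y a (\<lambda>s. x) = a \<bullet> G x"
proof -
  show ?thesis unfolding c_fun_def G_def by (simp add: integral_const_real content_real tdnn)
qed

lemma uniq:
  assumes p1: "pos_vec x1" and p2: "pos_vec x2"
    and w1: "Lv x1 - Lv xb \<in> Wsp v" and w2: "Lv x2 - Lv xb \<in> Wsp v"
    and g: "\<forall>a\<in>Wsp v. a \<bullet> G x1 = a \<bullet> G x2"
  shows "x1 = x2"
proof -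
  define \<mu> where "\<mu> = Lv x1 - Lv x2"
  have "\<mu> = (Lv x1 - Lv xb) - (Lv x2 - Lv xb)" by (simp add: \<mu>_def)
  then have "\<mu> \<in> Wsp v" using Wsp_diff[OF w1 w2] by simp
  then have z: "\<mu> \<bullet> (G x1 - G x2) = 0" using g by (simp add: inner_diff_right)
  define f1 where "f1 j = (ln (x1 $ j) - ln (x2 $ j)) * (x1 $ j - x2 $ j)" for j
  define f2 where "f2 i = \<kappa> i * \<tau>d i * ((exp (y i \<bullet> Lv x1) - exp (y i \<bullet> Lv x2)) * (y i \<bullet> Lv x1 - y i \<bullet> Lv x2))" for i
  have "\<mu> \<bullet> (G x1 - G x2) = (\<Sum>j\<in>UNIV. f1 j) + (\<Sum>i\<in>UNIV. f2 i)"
  proof -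
    have a: "\<mu> \<bullet> (x1 - x2) = (\<Sum>j\<in>UNIV. f1 j)"
      by (simp add: inner_vec_def \<mu>_def Lv_def f1_def)
    have b: "\<mu> \<bullet> ((\<Sum>i\<in>UNIV. (\<kappa> i * (\<tau>d i * mpow x1 (y i))) *\<^sub>R y i) - (\<Sum>i\<in>UNIV. (\<kappa> i * (\<tau>d i * mpow x2 (y i))) *\<^sub>R y i))
        = (\<Sum>i\<in>UNIV. f2 i)"
      unfolding sum_subtractf[symmetric] inner_sum_right
      by (rule sum.cong[OF refl])
        (simp add: mpow_exp[OF p1] mpow_exp[OF p2] f2_def \<mu>_def inner_diff_left inner_diff_right
          inner_commute algebra_simps)
    have "G x1 - G x2 = (x1 - x2) + ((\<Sum>i\<in>UNIV. (\<kappa> i * (\<tau>d i * mpow x1 (y i))) *\<^sub>R y i) - (\<Sum>i\<in>UNIV. (\<kappa> i * (\<tau>d i * mpow x2 (y i))) *\<^sub>R y i))"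
      by (simp add: G_def)
    then show ?thesis using a b by (simp add: inner_add_right)
  qed
  moreover have n1: "\<forall>j\<in>UNIV. 0 \<le> f1 j"
    using p1 p2 ln_mono_prod(1) unfolding pos_vec_def f1_def by blast
  moreover have "\<forall>i\<in>UNIV. 0 \<le> f2 i"
    unfolding f2_def using kpos tdnn exp_mono_prod
    by (metis less_imp_le mult_nonneg_nonneg)
  then have "0 \<le> (\<Sum>i\<in>UNIV. f2 i)" by (simp add: sum_nonneg)
  moreover have "0 \<le> (\<Sum>j\<in>UNIV. f1 j)" using n1 by (simp add: sum_nonneg)
  ultimately have "(\<Sum>j\<in>UNIV. f1 j) = 0" using z by linarith
  then have "f1 j = 0" for j using sum_nonneg_eq_0_iff[of UNIV f1] n1 by auto
  then have "x1 $ j = x2 $ j" for j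
    using p1 p2 ln_mono_prod(2) unfolding pos_vec_def f1_def by blast
  then show ?thesis by (simp add: vec_eq_iff)
qed

end


context dcb
begin

lemma exist:
  assumes pp: "pos_vec p" and q0: "\<forall>i. 0 \<le> q i" and qz: "\<forall>i. \<tau>d i = 0 \<longrightarrow> q i = 0"
  shows "\<exists>x. pos_vec x \<and> Lv x - Lv xb \<in> Wsp v \<and>
     (\<forall>a\<in>Wsp v. a \<bullet> G x = a \<bullet> (p + (\<Sum>i\<in>UNIV. q i *\<^sub>R y i)))"
proof -
  define T where "T = p + (\<Sum>i\<in>UNIV. q i *\<^sub>R y i)"
  define r where "r i = \<kappa> i * (\<tau>d i * mpow xb (y i))" for i
  have mxb: "0 < mpow xb (y i)" for i using mpow_exp[OF xbpos] by simp
  have r0: "0 \<le> r i" for i unfolding r_def using kpos[of i] tdnn[of i] mxb[of i] by simp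
  have rq: "r i = 0 \<longrightarrow> q i = 0" for i unfolding r_def using kpos[of i] mxb[of i] qz by simp
  have xbj: "0 < xb $ j" for j using xbpos by (simp add: pos_vec_def)
  have pj: "0 < p $ j" for j using pp by (simp add: pos_vec_def)
  define \<Phi> where "\<Phi> \<mu> = (\<Sum>j\<in>UNIV. xb $ j * exp (\<mu> $ j)) + (\<Sum>i\<in>UNIV. r i * exp (y i \<bullet> \<mu>)) - \<mu> \<bullet> T" for \<mu>
  have split: "\<Phi> \<mu> = (\<Sum>j\<in>UNIV. xb $ j * exp (\<mu> $ j) - p $ j * \<mu> $ j)
      + (\<Sum>i\<in>UNIV. r i * exp (y i \<bullet> \<mu>) - q i * (y i \<bullet> \<mu>))" for \<mu>
  proof -
    have "\<mu> \<bullet> T = \<mu> \<bullet> p + (\<Sum>i\<in>UNIV. q i * (y i \<bullet> \<mu>))"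
      unfolding T_def by (simp add: inner_add_right inner_sum_right inner_commute)
    moreover have "\<mu> \<bullet> p = (\<Sum>j\<in>UNIV. p $ j * \<mu> $ j)" by (simp add: inner_vec_def mult.commute)
    ultimately have "\<mu> \<bullet> T = (\<Sum>j\<in>UNIV. p $ j * \<mu> $ j) + (\<Sum>i\<in>UNIV. q i * (y i \<bullet> \<mu>))" by simp
    then show ?thesis unfolding \<Phi>_def by (simp add: sum_subtractf)
  qed
  have cont: "continuous_on UNIV \<Phi>"
    unfolding \<Phi>_def by (intro continuous_intros)
  obtain Dk where Dk: "\<And>i s. Dk i \<le> r i * exp s - q i * s"
    using lower1[OF r0 _ rq] q0 by metis
  obtain Dh where Dh: "\<And>j s. Dh j \<le> xb $ j * exp s - p $ j * s"
  proof -
    have "\<forall>j. \<exists>D. \<forall>s. D \<le> xb $ j * exp s - p $ j * s"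
    proof
      fix j show "\<exists>D. \<forall>s. D \<le> xb $ j * exp s - p $ j * s"
        using xbj[of j] pj[of j] by (intro lower1) auto
    qed
    then show ?thesis using that by metis
  qed
  define K where "K j = \<Phi> 0 - sum Dk UNIV - sum Dh UNIV + Dh j" for j
  obtain B where B: "\<And>j s. xb $ j * exp s - p $ j * s \<le> K j \<Longrightarrow> \<bar>s\<bar> \<le> B j"
  proof -
    have "\<forall>j. \<exists>b. \<forall>s. xb $ j * exp s - p $ j * s \<le> K j \<longrightarrow> \<bar>s\<bar> \<le> b"
    proof
      fix j show "\<exists>b. \<forall>s. xb $ j * exp s - p $ j * s \<le> K j \<longrightarrow> \<bar>s\<bar> \<le> b"
        using coercive1[OF xbj[of j] pj[of j]] by blast
    qed
    then show ?thesis using that by metis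
  qed
  define Z where "Z = Wsp v \<inter> {\<mu>. \<Phi> \<mu> \<le> \<Phi> 0}"
  have bnd: "\<bar>\<mu> $ j\<bar> \<le> B j" if "\<mu> \<in> Z" for \<mu> j
  proof -
    define h where "h l = xb $ l * exp (\<mu> $ l) - p $ l * \<mu> $ l" for l
    have "sum Dk UNIV \<le> (\<Sum>i\<in>UNIV. r i * exp (y i \<bullet> \<mu>) - q i * (y i \<bullet> \<mu>))"
      by (rule sum_mono) (rule Dk)
    then have "sum h UNIV \<le> \<Phi> 0 - sum Dk UNIV" using that split[of \<mu>] unfolding Z_def h_def by auto
    moreover have "h j - Dh j \<le> (\<Sum>l\<in>UNIV. h l - Dh l)"
      by (rule member_le_sum) (auto simp: h_def Dh)
    ultimately have "h j \<le> K j" unfolding K_def by (simp add: sum_subtractf)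
    then show ?thesis using B unfolding h_def by blast
  qed
  have "bounded Z"
  proof (rule boundedI)
    fix \<mu> assume "\<mu> \<in> Z"
    then show "norm \<mu> \<le> sum B UNIV"
      using norm_le_l1_cart[of \<mu>] sum_mono[of UNIV "\<lambda>j. \<bar>\<mu> $ j\<bar>" B] bnd by force
  qed
  moreover have "closed Z"
    unfolding Z_def by (intro closed_Int Wsp_closed closed_Collect_le cont continuous_on_const)
  ultimately have "compact Z" by (simp add: compact_eq_bounded_closed)
  moreover have "0 \<in> Z" by (simp add: Z_def Wsp_def)
  ultimately obtain \<mu>0 where m0: "\<mu>0 \<in> Z" and mmin: "\<forall>\<mu>\<in>Z. \<Phi> \<mu>0 \<le> \<Phi> \<mu>"
    using continuous_attains_inf[of Z \<Phi>] continuous_on_subset[OF cont] by blast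
  have W0: "\<mu>0 \<in> Wsp v" using m0 by (simp add: Z_def)
  have gmin: "\<Phi> \<mu>0 \<le> \<Phi> \<mu>" if "\<mu> \<in> Wsp v" for \<mu>
  proof (cases "\<mu> \<in> Z")
    case True then show ?thesis using mmin by blast
  next
    case False
    then have "\<Phi> 0 < \<Phi> \<mu>" using that by (auto simp: Z_def)
    moreover have "\<Phi> \<mu>0 \<le> \<Phi> 0" using mmin \<open>0 \<in> Z\<close> by blast
    ultimately show ?thesis by simp
  qed
  define x where "x = (\<chi> j. xb $ j * exp (\<mu>0 $ j))"
  have xpos: "pos_vec x" unfolding x_def pos_vec_def using xbj by simp
  have Lx: "Lv x = Lv xb + \<mu>0"
    unfolding x_def Lv_def using xbj by (simp add: vec_eq_iff ln_mult less_imp_neq[THEN not_sym])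
  have mx: "mpow x (y i) = mpow xb (y i) * exp (y i \<bullet> \<mu>0)" for i
    using mpow_exp[OF xpos] mpow_exp[OF xbpos] Lx by (simp add: inner_add_right exp_add)
  have grad: "a \<bullet> G x = a \<bullet> T" if aW: "a \<in> Wsp v" for a
  proof -
    define g where "g t = (\<Sum>j\<in>UNIV. xb $ j * exp (\<mu>0 $ j + t * a $ j))
       + (\<Sum>i\<in>UNIV. r i * exp (y i \<bullet> \<mu>0 + t * (y i \<bullet> a))) - (\<mu>0 \<bullet> T + t * (a \<bullet> T))" for t
    define l where "l = (\<Sum>j\<in>UNIV. xb $ j * exp (\<mu>0 $ j) * a $ j)
       + (\<Sum>i\<in>UNIV. r i * exp (y i \<bullet> \<mu>0) * (y i \<bullet> a)) - a \<bullet> T"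
    have gphi: "g t = \<Phi> (\<mu>0 + t *\<^sub>R a)" for t
      unfolding g_def \<Phi>_def by (simp add: inner_add_right inner_add_left algebra_simps)
    have "(g has_real_derivative l) (at 0)"
      unfolding g_def l_def
      apply (rule derivative_eq_intros refl | simp)+
      apply (simp add: ac_simps)
      done
    moreover have "\<forall>t. \<bar>0 - t\<bar> < 1 \<longrightarrow> g 0 \<le> g t"
      using gmin Wsp_lin[OF W0 aW] gphi by simp
    ultimately have "l = 0" using DERIV_local_min[of g l 0 1] by simp
    moreover have "a \<bullet> G x = (\<Sum>j\<in>UNIV. xb $ j * exp (\<mu>0 $ j) * a $ j)
       + (\<Sum>i\<in>UNIV. r i * exp (y i \<bullet> \<mu>0) * (y i \<bullet> a))"
    proof -
      have "a \<bullet> G x = a \<bullet> x + (\<Sum>i\<in>UNIV. (\<kappa> i * (\<tau>d i * mpow x (y i))) * (y i \<bullet> a))"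
        unfolding G_def by (simp add: inner_add_right inner_sum_right inner_commute)
      moreover have "a \<bullet> x = (\<Sum>j\<in>UNIV. xb $ j * exp (\<mu>0 $ j) * a $ j)"
        unfolding x_def inner_vec_def by (simp add: ac_simps)
      moreover have "(\<kappa> i * (\<tau>d i * mpow x (y i))) = r i * exp (y i \<bullet> \<mu>0)" for i
        unfolding r_def mx by simp
      ultimately show ?thesis by simp
    qed
    ultimately show ?thesis unfolding l_def by simp
  qed
  show ?thesis
    using xpos Lx W0 grad unfolding T_def by auto
qed

end


theorem mainTheorem6:
  fixes \<kappa> \<tau>d :: "'r::finite \<Rightarrow> real" and y v :: "'r \<Rightarrow> real^'n::finite"
    and \<tau> :: real and \<theta> :: "real \<Rightarrow> real^'n"
  assumes "lcDCB1 \<kappa> \<tau>d y v"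
    and "\<forall>i. \<tau>d i \<le> \<tau>"
    and "continuous_on {-\<tau>..0} \<theta>"
    and "\<forall>s\<in>{-\<tau>..0}. pos_vec (\<theta> s)"
  shows "\<exists>!x. pos_equilibrium \<kappa> y v x \<and> (\<lambda>s. x) \<in> compat_class \<kappa> \<tau>d y v \<tau> \<theta>"
proof -
  obtain vt \<kappa>t where dm: "delayed_mas \<kappa> \<tau>d y v"
    and cbs: "complex_balanced_system \<kappa>t y (\<lambda>i. y i + vt i)"
    and hv0: "\<forall>i. v i = (\<kappa>t i / \<kappa> i) *\<^sub>R vt i \<and> \<kappa>t i / \<kappa> i \<le> 1"
    using assms(1) unfolding lcDCB1_def by blast
  obtain xb where cbe: "complex_balanced_eq \<kappa>t y (\<lambda>i. y i + vt i) xb"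
    using cbs unfolding complex_balanced_system_def by blast
  have hv: "\<forall>i. v i = (\<kappa>t i / \<kappa> i) *\<^sub>R vt i" using hv0 by blast
  interpret dcb \<kappa> \<tau>d \<kappa>t y v vt xb using dm cbs cbe hv by unfold_locales
  define p where "p = \<theta> 0"
  define q where "q i = \<kappa> i * integral {- \<tau>d i..0} (\<lambda>s. mpow (\<theta> s) (y i))" for i
  define T where "T = p + (\<Sum>i\<in>UNIV. q i *\<^sub>R y i)"
  have "0 \<le> \<tau>" using tdnn[of undefined] assms(2) by (meson order_trans)
  then have pp: "pos_vec p" unfolding p_def using assms(4) by auto
  have q0: "\<forall>i. 0 \<le> q i"
  proof
    fix i
    have "0 \<le> integral {- \<tau>d i..0} (\<lambda>s. mpow (\<theta> s) (y i))"
    proof (cases "(\<lambda>s. mpow (\<theta> s) (y i)) integrable_on {- \<tau>d i..0}")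
      case True then show ?thesis by (rule integral_nonneg) (rule mpow_nonneg)
    next
      case False then show ?thesis by (simp add: not_integrable_integral)
    qed
    then show "0 \<le> q i" unfolding q_def using kpos[of i] by simp
  qed
  have qz: "\<forall>i. \<tau>d i = 0 \<longrightarrow> q i = 0" unfolding q_def by simp
  have cth: "c_fun \<kappa> \<tau>d y a \<theta> = a \<bullet> T" for a
    unfolding c_fun_def T_def p_def q_def by simp
  have cls: "(\<lambda>s. x) \<in> compat_class \<kappa> \<tau>d y v \<tau> \<theta> \<longleftrightarrow> (\<forall>a\<in>Wsp v. a \<bullet> G x = a \<bullet> T)"
    if "pos_vec x" for x
    using that unfolding compat_class_def Wsp_def
    by (auto simp: cfun_const cth nonneg_vec_def pos_vec_def less_imp_le)
  obtain x where xp: "pos_vec x" and xw: "Lv x - Lv xb \<in> Wsp v"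
    and xg: "\<forall>a\<in>Wsp v. a \<bullet> G x = a \<bullet> T"
    using exist[OF pp q0 qz] unfolding T_def by blast
  show ?thesis
  proof (rule ex1I[of _ x])
    show "pos_equilibrium \<kappa> y v x \<and> (\<lambda>s. x) \<in> compat_class \<kappa> \<tau>d y v \<tau> \<theta>"
      using eq_iff[OF xp] xw cls[OF xp] xg by simp
  next
    fix x' assume h: "pos_equilibrium \<kappa> y v x' \<and> (\<lambda>s. x') \<in> compat_class \<kappa> \<tau>d y v \<tau> \<theta>"
    then have xp': "pos_vec x'" by (simp add: pos_equilibrium_def)
    have xw': "Lv x' - Lv xb \<in> Wsp v" using h eq_iff[OF xp'] by simp
    have "\<forall>a\<in>Wsp v. a \<bullet> G x' = a \<bullet> T" using h cls[OF xp'] by simp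
    then show "x' = x" using uniq[OF xp' xp xw' xw] xg by simp
  qed
qed


end
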